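(* Let $d\ge2$, let $Q$ be a qplex, and let $r$ be a type-preserving measurement for $Q$ with stretched measurement matrix $R$. Then $R$ is an orthogonal $d^2\times d^2$ matrix with $Rc=c$. Moreover there exist points $s_1,\dots,s_{d^2}\in Q\cap S_{\rm o}$ which are the vertices of a regular simplex and satisfy, for all $i,j$, $$R_{ij}=(d+1)s_i(j)-\frac1d,\qquad Rs_i=e_i,\qquad (Re_i)(j)=s_j(i).$$
   Context: Fix an integer $d\ge 2$. $\langle\cdot,\cdot\rangle$ is the standard inner product on $\mathbb{R}^{d^2}$, $\|\cdot\|$ the Euclidean norm. $\Delta=\{p\in\mathbb{R}^{d^2}: p(i)\ge0,\ \sum_ip(i)=1\}$; $H=\{u\in\mathbb{R}^{d^2}:\sum_i u(i)=1\}$; $c=(1/d^2,\dots,1/d^2)$. For $A\subseteq H$ the polar is $A^*=\{u\in H:\langle u,v\rangle\ge\frac{1}{d(d+1)}\ \forall v\in A\}$. Out-ball $B_{\rm o}=\{u\in H:\|u-c\|\le r_{\rm o}\}$, $r_{\rm o}^2=\frac{d-1}{d^2(d+1)}$, boundary sphere $S_{\rm o}$. Basis distributions $e_k(i)=\frac{1}{d+1}(\delta_{ki}+\frac1d)$. A qplex is a set $Q\subseteq\Delta\cap B_{\rm o}$ with $Q^*=Q$. A measurement (with $d^2$ outcomes) is an array of reals $r(i|j)\ge0$, $i,j\in\{1,\dots,d^2\}$, with $\sum_i r(i|j)=1$ for every $j$. For a qplex $Q$ and $q\in Q$, define $q_r(i)=\sum_j\big[(d+1)q(j)-\frac1d\big]r(i|j)$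 and $Q_r=\{q_r:q\in Q\}$. The measurement is type-preserving for $Q$ if $Q_r$ is a qplex, and $Q$-preserving if $Q_r=Q$. Its stretched measurement matrix is $R_{ij}=(d+1)r(i|j)-\frac1d\sum_k r(i|k)$, so that $q_r=Rq$. Points $s_1,\dots,s_{d^2}$ are vertices of a regular simplex if they are distinct and all pairwise distances $\|s_i-s_j\|$, $i\ne j$, are equal. *)

theory Defs
  imports "HOL-Analysis.Analysis"
begin

text \<open>Vectors in R^(d^2) are modelled as real^'n with CARD('n) = d^2;
  the parameter d is passed explicitly.\<close>

definition simplexD :: "(real^'n) set" where
  "simplexD = {p. (\<forall>i. p$i \<ge> 0) \<and> (\<Sum>i\<in>UNIV. p$i) = 1}"

definition hypH :: "(real^'n) set" where
  "hypH = {u. (\<Sum>i\<in>UNIV. u$i) = 1}"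

definition centre :: "nat \<Rightarrow> real^'n" where
  "centre d = (\<chi> i. 1 / (real d)^2)"

definition polar :: "nat \<Rightarrow> (real^'n) set \<Rightarrow> (real^'n) set" where
  "polar d A = {u \<in> hypH. \<forall>v\<in>A. inner u v \<ge> 1 / (real d * (real d + 1))}"

definition rout_sq :: "nat \<Rightarrow> real" where
  "rout_sq d = (real d - 1) / ((real d)^2 * (real d + 1))"

definition out_ball :: "nat \<Rightarrow> (real^'n) set" where
  "out_ball d = {u \<in> hypH. (norm (u - centre d))^2 \<le> rout_sq d}"

definition out_sphere :: "nat \<Rightarrow> (real^'n) set" where
  "out_sphere d = {u \<in> hypH. (norm (u - centre d))^2 = rout_sq d}"

definition basis_dist :: "nat \<Rightarrow> 'n \<Rightarrow> real^'n" where
  "basis_dist d k = (\<chi> i. (1 / (real d + 1)) * ((if k = i then 1 else 0) + 1 / real d))"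

definition qplex :: "nat \<Rightarrow> (real^'n) set \<Rightarrow> bool" where
  "qplex d Q \<longleftrightarrow> Q \<subseteq> simplexD \<inter> out_ball d \<and> polar d Q = Q"

text \<open>A measurement: r i j stands for r(i|j).\<close>
definition measurement :: "('n \<Rightarrow> 'n \<Rightarrow> real) \<Rightarrow> bool" where
  "measurement r \<longleftrightarrow> (\<forall>i j. r i j \<ge> 0) \<and> (\<forall>j. (\<Sum>i\<in>UNIV. r i j) = 1)"

definition q_r :: "nat \<Rightarrow> ('n \<Rightarrow> 'n \<Rightarrow> real) \<Rightarrow> real^'n \<Rightarrow> real^'n" where
  "q_r d r q = (\<chi> i. \<Sum>j\<in>UNIV. ((real d + 1) * q$j - 1 / real d) * r i j)"

definition type_preserving :: "nat \<Rightarrow> (real^'n) set \<Rightarrow> ('n \<Rightarrow> 'n \<Rightarrow> real) \<Rightarrow> bool" where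
  "type_preserving d Q r \<longleftrightarrow> qplex d (q_r d r ` Q)"

definition stretched :: "nat \<Rightarrow> ('n \<Rightarrow> 'n \<Rightarrow> real) \<Rightarrow> real^'n^'n" where
  "stretched d r = (\<chi> i j. (real d + 1) * r i j - (1 / real d) * (\<Sum>k\<in>UNIV. r i k))"

definition regular_simplex_vertices :: "('n \<Rightarrow> real^'n) \<Rightarrow> bool" where
  "regular_simplex_vertices s \<longleftrightarrow> inj s \<and>
     (\<forall>i j k l. i \<noteq> j \<longrightarrow> k \<noteq> l \<longrightarrow> dist (s i) (s j) = dist (s k) (s l))"

end

theory Submission
  imports Defs
begin

lemma norm_sq_hyp:
  assumes "real CARD('n) = (real d)^2" "d > 0" "(u::real^'n) \<in> hypH"
  shows "(norm (u - centre d))^2 = (norm u)^2 - 1/(real d)^2"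
proof -
  have s: "(\<Sum>i\<in>UNIV. u$i) = 1" using assms(3) by (simp add: hypH_def)
  have e: "(norm (u - centre d))^2 = inner u u - 2 * inner u (centre d) + inner (centre d :: real^'n) (centre d)"
    using inner_commute[of u "centre d :: real^'n"] by (simp add: power2_norm_eq_inner inner_diff_left inner_diff_right)
  have a: "inner u (centre d) = (\<Sum>i\<in>UNIV. u$i) / (real d)^2"
    by (simp add: inner_vec_def centre_def sum_divide_distrib)
  have b: "inner (centre d :: real^'n) (centre d) = real CARD('n) / (real d)^4"
    by (simp add: inner_vec_def centre_def power_mult_distrib field_simps)
  have "real CARD('n) / (real d)^4 = 1 / (real d)^2" using assms(1,2) by (simp add: field_simps power_mult_distrib flip: power_add)
  then show ?thesis using e a b s by (simp add: power2_norm_eq_inner)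
qed

lemma inner_le_sq:
  fixes p q :: "real^'n"
  assumes "(norm p)^2 \<le> a" "(norm q)^2 \<le> a"
  shows "inner p q \<le> a"
proof -
  have "0 \<le> (norm (p - q))^2" by simp
  also have "\<dots> = (norm p)^2 + (norm q)^2 - 2 * inner p q"
    by (simp add: power2_norm_eq_inner inner_diff_left inner_diff_right inner_commute)
  finally show ?thesis using assms by linarith
qed

lemma inner_eq_sq:
  fixes p q :: "real^'n"
  assumes "(norm p)^2 \<le> a" "(norm q)^2 \<le> a" "inner p q \<ge> a"
  shows "p = q"
proof -
  have "(norm (p - q))^2 = (norm p)^2 + (norm q)^2 - 2 * inner p q"
    by (simp add: power2_norm_eq_inner inner_diff_left inner_diff_right inner_commute)
  also have "\<dots> \<le> 0" using assms by linarith
  finally show ?thesis by simp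
qed

lemma rout_plus:
  assumes "d > 0"
  shows "rout_sq d + 1/(real d)^2 = 2 / (real d * (real d + 1))"
proof -
  define D where "D = real d"
  have D: "D > 0" "D + 1 > 0" using assms D_def by simp_all
  have "(D - 1) / (D^2 * (D + 1)) + 1 / D^2 = 2 / (D * (D + 1))"
  proof -
    have n: "D^2 * (D + 1) \<noteq> 0" "D^2 \<noteq> 0" "D * (D + 1) \<noteq> 0" using D by auto
    have "(D - 1) / (D^2 * (D + 1)) + 1 / D^2 = ((D - 1) + (D + 1)) / (D^2 * (D + 1))"
      using n by (simp add: add_divide_distrib divide_simps)
    also have "\<dots> = 2 / (D * (D + 1))" using n by (simp add: power2_eq_square divide_simps) 
    finally show ?thesis .
  qed
  then show ?thesis by (simp add: rout_sq_def D_def)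
qed

theorem mainTheorem10:
  fixes d :: nat and Q :: "(real^'n) set" and r :: "'n \<Rightarrow> 'n \<Rightarrow> real"
    and R :: "real^'n^'n"
  assumes "d \<ge> 2" and "CARD('n) = d^2"
    and "qplex d Q"
    and "measurement r" and "type_preserving d Q r"
    and "R = stretched d r"
  shows "orthogonal_matrix R \<and> R *v centre d = centre d \<and>
    (\<exists>s :: 'n \<Rightarrow> real^'n. (\<forall>i. s i \<in> Q \<inter> out_sphere d) \<and> regular_simplex_vertices s \<and>
       (\<forall>i j. R$i$j = (real d + 1) * (s i)$j - 1 / real d \<and>
              R *v s i = basis_dist d i \<and>
              (R *v basis_dist d i)$j = (s j)$i))"
proof -
  define D where "D = real d"
  have D0: "D > 0" "D + 1 > 0" "D \<ge> 2" using assms(1) D_def by auto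
  have "D * D \<ge> 0" by simp
  then have D: "D > 0" "D + 1 > 0" "D \<ge> 2" "D + D * D \<noteq> 0" "D \<noteq> 0" "D + 1 \<noteq> 0" "D * (D + 1) \<noteq> 0"
    using D0 \<open>D * D \<ge> 0\<close> by (auto, linarith+)
  have dpos: "d > 0" using assms(1) by simp
  have card: "real CARD('n) = D^2" using assms(2) D_def by simp
  define Qr where "Qr = q_r d r ` Q"
  have Qr: "qplex d Qr" using assms(5) Qr_def by (simp add: type_preserving_def)
  have Qq: "Q \<subseteq> simplexD \<inter> out_ball d" "polar d Q = Q" using assms(3) by (auto simp: qplex_def)
  have Qrq: "Qr \<subseteq> simplexD \<inter> out_ball d" "polar d Qr = Qr" using Qr by (auto simp: qplex_def)
  have rnn: "\<And>i j. r i j \<ge> 0" and rcol: "\<And>j. (\<Sum>i\<in>UNIV. r i j) = 1"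
    using assms(4) by (auto simp: measurement_def)
  define w where "w i = (\<Sum>j\<in>UNIV. r i j)" for i
  define rho :: "'n \<Rightarrow> real^'n" where "rho i = (\<chi> j. r i j)" for i
  have wnn: "w i \<ge> 0" for i unfolding w_def using rnn by (simp add: sum_nonneg)
  have qr_comp: "(q_r d r q)$i = (D + 1) * inner (rho i) q - w i / D" for q i
  proof -
    have "(q_r d r q)$i = (\<Sum>j\<in>UNIV. (D + 1) * (r i j * q$j) - r i j / D)"
      by (simp add: q_r_def D_def algebra_simps)
    also have "\<dots> = (D + 1) * (\<Sum>j\<in>UNIV. r i j * q$j) - w i / D"
      by (simp add: sum_subtractf sum_distrib_left w_def sum_divide_distrib)
    finally show ?thesis by (simp add: inner_vec_def rho_def)
  qed
  have RA: "R *v q = q_r d r q" if "q \<in> hypH" for q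
  proof -
    have sq: "(\<Sum>j\<in>UNIV. q$j) = 1" using that by (simp add: hypH_def)
    show ?thesis
    proof (rule vec_eq_iff[THEN iffD2], rule allI)
      fix i
      have "(R *v q)$i = (\<Sum>j\<in>UNIV. (D + 1) * (r i j * q$j) - (w i / D) * q$j)"
        by (simp add: assms(6) matrix_vector_mult_def stretched_def D_def w_def algebra_simps)
      also have "\<dots> = (D + 1) * inner (rho i) q - (w i / D) * (\<Sum>j\<in>UNIV. q$j)"
        by (simp add: sum_subtractf sum_distrib_left inner_vec_def rho_def)
      also have "\<dots> = (q_r d r q)$i" using sq qr_comp by simp
      finally show "(R *v q)$i = (q_r d r q)$i" .
    qed
  qed
  have eQr: "basis_dist d k \<in> Qr" for k
  proof -
    have "basis_dist d k \<in> polar d Qr"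
      unfolding polar_def
    proof (intro CollectI conjI ballI)
      have "(\<Sum>i\<in>UNIV. (basis_dist d k :: real^'n)$i) = (1 / (D + 1)) * (1 + real CARD('n) / D)"
        by (simp add: basis_dist_def D_def sum_divide_distrib[symmetric] sum.distrib)
      also have "\<dots> = 1" using card D by (simp add: field_simps power2_eq_square)
      finally show "basis_dist d k \<in> hypH" by (simp add: hypH_def)
      fix v assume v: "v \<in> Qr"
      then have vs: "v \<in> simplexD" using Qrq by auto
      then have "v$k \<ge> 0" "(\<Sum>i\<in>UNIV. v$i) = 1" by (auto simp: simplexD_def)
      have "inner (basis_dist d k) v = (\<Sum>i\<in>UNIV. (1/(D+1)) * ((if k = i then v$i else 0) + v$i / D))"
        unfolding inner_vec_def by (rule sum.cong) (auto simp: basis_dist_def D_def algebra_simps)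
      also have "\<dots> = (1 / (D + 1)) * (v$k + (\<Sum>i\<in>UNIV. v$i) / D)"
        by (simp add: sum_distrib_left[symmetric] sum.distrib sum_divide_distrib[symmetric])
      also have "\<dots> = (1 / (D + 1)) * (v$k + 1 / D)" using \<open>(\<Sum>i\<in>UNIV. v$i) = 1\<close> by simp
      finally have ie: "inner (basis_dist d k) v = (1 / (D + 1)) * (v$k + 1 / D)" .
      have "(1 / (D + 1)) * (0 + 1 / D) \<le> (1 / (D + 1)) * (v$k + 1 / D)"
        using \<open>v$k \<ge> 0\<close> D by (intro mult_left_mono) auto
      moreover have "(1 / (D + 1)) * (0 + 1 / D) = 1 / (D * (D + 1))" by simp
      ultimately show "1 / (real d * (real d + 1)) \<le> inner (basis_dist d k) v" using ie unfolding D_def by linarith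
    qed
    then show ?thesis using Qrq(2) by simp
  qed
  obtain s where s: "\<And>i. s i \<in> Q" "\<And>i. q_r d r (s i) = basis_dist d i"
  proof -
    have "\<forall>i. \<exists>q. q \<in> Q \<and> q_r d r q = basis_dist d i"
      using eQr unfolding Qr_def by (metis imageE)
    then obtain s where "\<forall>i. s i \<in> Q \<and> q_r d r (s i) = basis_dist d i" by metis
    then show ?thesis using that by blast
  qed

  define a where "a = 2 / (D * (D + 1))"
  have hypQ: "u \<in> hypH" if "u \<in> Q" for u
    using that Qq(1) by (auto simp: simplexD_def hypH_def)
  have normQ: "(norm u)^2 \<le> a" if "u \<in> Q" for u
  proof -
    have "u \<in> out_ball d" using that Qq(1) by auto
    then have "(norm (u - centre d))^2 \<le> rout_sq d" by (simp add: out_ball_def)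
    then show ?thesis using norm_sq_hyp[OF card[unfolded D_def] dpos hypQ[OF that]] rout_plus[OF dpos]
      unfolding a_def D_def by linarith
  qed
  have inner_ge: "inner (rho i) v \<ge> w i / (D * (D + 1))" if "v \<in> Q" for i v
  proof -
    have "q_r d r v \<in> Qr" using that Qr_def by simp
    then have "q_r d r v \<in> simplexD" using Qrq(1) by auto
    then have "(q_r d r v)$i \<ge> 0" by (simp add: simplexD_def)
    then have "(D + 1) * inner (rho i) v \<ge> w i / D" using qr_comp by simp
    then have "w i \<le> inner (rho i) v * (D * (D + 1))" using D by (simp add: field_simps)
    moreover have "D * (D + 1) > 0" using D by simp
    ultimately show ?thesis by (simp add: pos_divide_le_eq)
  qed
  have bd: "(basis_dist d k :: real^'n)$i = (if k = i then 1 / D else 1 / (D * (D + 1)))" for k i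
  proof -
    have "D * D \<ge> 0" by simp
    then have nz: "D + D * D \<noteq> 0" using D by linarith
    have e1: "(1 + 1 / D) / (D + 1) = 1 / D" using D nz by (simp add: field_simps)
    have e2: "(1 / (D + 1)) * (0 + 1 / D) = 1 / (D * (D + 1))" by simp
    show ?thesis
      by (cases "k = i") (simp_all add: basis_dist_def D_def[symmetric] e1 e2)
  qed
  have rs: "inner (rho i) (s k) = ((basis_dist d k :: real^'n)$i + w i / D) / (D + 1)" for i k
  proof -
    have "(D + 1) * inner (rho i) (s k) - w i / D = (basis_dist d k :: real^'n)$i"
      using qr_comp[of "s k" i] s(2)[of k] by simp
    then show ?thesis using D by (simp add: field_simps)
  qed
  have w_ge: "w i \<ge> 1" for i
  proof (cases "w i = 0")
    case True
    then have "\<forall>j\<in>UNIV. r i j = 0" unfolding w_def using rnn by (simp add: sum_nonneg_eq_0_iff)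
    then have "rho i = 0" by (simp add: rho_def vec_eq_iff)
    then have "0 = ((basis_dist d i :: real^'n)$i + w i / D) / (D + 1)" using rs[of i i] by simp
    then show ?thesis using True bd[of i i] D by simp
  next
    case False
    then have wp: "w i > 0" using wnn[of i] by simp
    define p where "p = (1 / w i) *\<^sub>R rho i"
    have "p \<in> polar d Q" unfolding polar_def
    proof (intro CollectI conjI ballI)
      have "(\<Sum>j\<in>UNIV. p$j) = (\<Sum>j\<in>UNIV. r i j) / w i"
        by (simp add: p_def rho_def sum_divide_distrib)
      then show "p \<in> hypH" using wp by (simp add: hypH_def w_def)
      fix v assume "v \<in> Q"
      have "inner p v = inner (rho i) v / w i" by (simp add: p_def)
      moreover have "(w i / (D * (D + 1))) / w i \<le> inner (rho i) v / w i"
        using inner_ge[OF \<open>v \<in> Q\<close>, of i] wp by (intro divide_right_mono) auto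
      moreover have "(w i / (D * (D + 1))) / w i = 1 / (D * (D + 1))" using wp by simp
      ultimately show "1 / (real d * (real d + 1)) \<le> inner p v" by (simp add: D_def)
    qed
    then have pQ: "p \<in> Q" using Qq(2) by simp
    have "inner p (s i) \<le> a" by (rule inner_le_sq[OF normQ[OF pQ] normQ[OF s(1)]])
    moreover have "inner p (s i) = (1 / D + w i / D) / (D + 1) / w i"
      using rs[of i i] bd[of i i] by (simp add: p_def)
    ultimately have "(1 / D + w i / D) / (D + 1) / w i \<le> 2 / (D * (D + 1))" by (simp add: a_def)
    moreover have "(1 / D + w i / D) / (D + 1) / w i = ((1 + w i) / w i) * (1 / (D * (D + 1)))"
      by (simp add: add_divide_distrib[symmetric])
    moreover have "2 / (D * (D + 1)) = 2 * (1 / (D * (D + 1)))" by simp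
    moreover have "1 / (D * (D + 1)) > 0" using D by simp
    ultimately have "(1 + w i) / w i \<le> 2" using mult_le_cancel_right_pos by metis
    then have "(1 + w i) \<le> 2 * w i" using wp by (simp add: pos_divide_le_eq)
    then show ?thesis by simp
  qed
  have sumw: "(\<Sum>i\<in>UNIV. w i) = real CARD('n)"
    unfolding w_def using rcol by (subst sum.swap) simp
  have w1: "w i = 1" for i
  proof -
    have "(\<Sum>i\<in>UNIV. w i - 1) = 0" using sumw by (simp add: sum_subtractf)
    moreover have "\<forall>i\<in>UNIV. w i - 1 \<ge> 0" using w_ge by simp
    ultimately have "\<forall>i\<in>UNIV. w i - 1 = 0" by (simp add: sum_nonneg_eq_0_iff)
    then show ?thesis by simp
  qed
  have rhoQ: "rho i \<in> Q" for i
  proof -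
    have "rho i \<in> polar d Q" unfolding polar_def
    proof (intro CollectI conjI ballI)
      show "rho i \<in> hypH" using w1[of i] by (simp add: hypH_def rho_def w_def)
      fix v assume "v \<in> Q"
      then show "1 / (real d * (real d + 1)) \<le> inner (rho i) v" using inner_ge[of v i] w1[of i] by (simp add: D_def)
    qed
    then show ?thesis using Qq(2) by simp
  qed
  have rho_s: "rho i = s i" for i
  proof (rule inner_eq_sq[OF normQ[OF rhoQ] normQ[OF s(1)]])
    have "inner (rho i) (s i) = (1 / D + 1 / D) / (D + 1)" using rs[of i i] bd[of i i] w1[of i] by simp
    then show "a \<le> inner (rho i) (s i)" by (simp add: a_def)
  qed
  have gram: "inner (s i) (s k) = ((basis_dist d k :: real^'n)$i + 1 / D) / (D + 1)" for i k
    using rs[of i k] rho_s[of i] w1[of i] by simp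
  have sij: "(s i)$j = r i j" for i j using rho_s[of i] by (simp add: rho_def vec_eq_iff)
  have ssum: "(\<Sum>j\<in>UNIV. (s i)$j) = 1" for i using w1[of i] by (simp add: sij w_def)
  have Rij: "R$i$j = (D + 1) * (s i)$j - 1 / D" for i j
    using w1[of i] by (simp add: assms(6) stretched_def sij w_def[symmetric] D_def)
  have Dsq: "real CARD('n) / D^2 = 1" using card D by simp
  have expand: "(\<Sum>j\<in>UNIV. ((D + 1) * x$j - 1 / D) * ((D + 1) * y$j - 1 / D))
      = (D + 1)^2 * inner x y - (D + 1) / D * (\<Sum>j\<in>UNIV. x$j) - (D + 1) / D * (\<Sum>j\<in>UNIV. y$j)
        + real CARD('n) / D^2" for x y :: "real^'n"
  proof -
    have "(\<Sum>j\<in>UNIV. ((D + 1) * x$j - 1 / D) * ((D + 1) * y$j - 1 / D))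
       = (\<Sum>j\<in>UNIV. ((D + 1)^2 * (x$j * y$j) - (D + 1) / D * x$j) - ((D + 1) / D * y$j - 1 / D^2))"
      by (rule sum.cong) (use D in \<open>auto simp: field_simps power2_eq_square\<close>)
    also have "\<dots> = (D + 1)^2 * (\<Sum>j\<in>UNIV. x$j * y$j) - (D + 1) / D * (\<Sum>j\<in>UNIV. x$j)
        - ((D + 1) / D * (\<Sum>j\<in>UNIV. y$j) - real CARD('n) / D^2)"
      by (simp add: sum_subtractf sum_distrib_left)
    finally show ?thesis by (simp add: inner_vec_def)
  qed
  have RRt: "R ** transpose R = mat 1"
  proof (rule vec_eq_iff[THEN iffD2], rule allI, rule vec_eq_iff[THEN iffD2], rule allI)
    fix i k
    have "(R ** transpose R)$i$k = (\<Sum>j\<in>UNIV. ((D + 1) * (s i)$j - 1 / D) * ((D + 1) * (s k)$j - 1 / D))"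
      by (simp add: matrix_matrix_mult_def transpose_def Rij)
    also have "\<dots> = (D + 1)^2 * inner (s i) (s k) - (D + 1) / D - (D + 1) / D + 1"
      using expand ssum Dsq by simp
    also have "\<dots> = (D + 1) * (basis_dist d k $ i) - (D + 1) / D + 1"
    proof -
      have "(D + 1)^2 * inner (s i) (s k) = (D + 1) * (basis_dist d k $ i + 1 / D)"
        using D by (simp add: gram power2_eq_square)
      moreover have "(D + 1) * (basis_dist d k $ i + 1 / D) = (D + 1) * (basis_dist d k $ i) + (D + 1) / D"
        by (simp add: distrib_left)
      ultimately show ?thesis by linarith
    qed
    also have "\<dots> = (if i = k then 1 else 0)"
    proof (cases "i = k")
      case True
      then show ?thesis using D by (simp add: bd)
    next
      case False
      have "(D + 1) * (1 / (D * (D + 1))) - (D + 1) / D + 1 = 0" using D by (simp add: field_simps)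
      then show ?thesis using False by (simp add: bd)
    qed
    finally show "(R ** transpose R)$i$k = mat 1 $ i $ k" by (simp add: mat_def)
  qed
  have orth: "orthogonal_matrix R"
    unfolding orthogonal_matrix_def using RRt matrix_left_right_inverse by blast
  have Rc: "R *v centre d = centre d"
  proof (rule vec_eq_iff[THEN iffD2], rule allI)
    fix i
    have "(R *v centre d)$i = (\<Sum>j\<in>UNIV. ((D + 1) * (s i)$j - 1 / D) * (1 / D^2))"
      by (simp add: matrix_vector_mult_def centre_def Rij D_def)
    also have "\<dots> = ((D + 1) * (\<Sum>j\<in>UNIV. (s i)$j) - real CARD('n) / D) * (1 / D^2)"
      by (simp add: sum_divide_distrib[symmetric] sum_subtractf sum_distrib_left)
    also have "\<dots> = 1 / D^2" using ssum card D by (simp add: field_simps power2_eq_square)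
    finally show "(R *v centre d)$i = centre d $ i" by (simp add: centre_def D_def)
  qed
  have sQ: "s i \<in> Q \<inter> out_sphere d" for i
  proof -
    have "(norm (s i))^2 = a" using gram[of i i] bd[of i i] D
      by (simp add: power2_norm_eq_inner a_def field_simps)
    then have "(norm (s i - centre d))^2 = rout_sq d"
      using norm_sq_hyp[OF card[unfolded D_def] dpos hypQ[OF s(1)[of i]]] rout_plus[OF dpos]
      unfolding a_def D_def by linarith
    then show ?thesis using s(1) hypQ[OF s(1)] by (simp add: out_sphere_def)
  qed
  have dsq: "(dist (s i) (s j))^2 = 2 / (D + 1)^2" if "i \<noteq> j" for i j
  proof -
    have "(dist (s i) (s j))^2 = inner (s i) (s i) + inner (s j) (s j) - 2 * inner (s i) (s j)"
      using inner_commute[of "s i" "s j"]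
      by (simp add: dist_norm power2_norm_eq_inner inner_diff_left inner_diff_right)
    also have "\<dots> = (2/D)/(D+1) + (2/D)/(D+1) - 2*((1/(D*(D+1)) + 1/D)/(D+1))"
      using that by (simp add: gram bd)
    also have "\<dots> = (2/D - 2/(D*(D+1))) / (D+1)"
      by (simp add: field_simps add_divide_distrib diff_divide_distrib)
    also have "2/D - 2/(D*(D+1)) = 2/(D+1)" using D by (simp add: field_simps)
    finally show ?thesis by (simp add: power2_eq_square)
  qed
  have dummy: True by simp
  have reg: "regular_simplex_vertices s"
    unfolding regular_simplex_vertices_def
  proof (intro conjI allI impI)
    show "inj s"
    proof (rule injI, rule ccontr)
      fix i j assume "s i = s j" "i \<noteq> j"
      then show False using dsq[of i j] D by simp
    qed
    fix i j k l :: 'n assume "i \<noteq> j" "k \<noteq> l"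
    then have "(dist (s i) (s j))^2 = (dist (s k) (s l))^2" using dsq by simp
    then show "dist (s i) (s j) = dist (s k) (s l)" by (simp add: power2_eq_iff_nonneg)
  qed
  have bdH: "(basis_dist d i :: real^'n) \<in> hypH" for i
    using eQr[of i] Qrq(1) by (auto simp: simplexD_def hypH_def)
  have Rbd: "(R *v basis_dist d i)$j = (s j)$i" for i j :: 'n
  proof -
    have "(R *v basis_dist d i)$j = (q_r d r (basis_dist d i))$j" using RA[OF bdH] by simp
    also have "\<dots> = (\<Sum>k\<in>UNIV. (if i = k then r j k else 0))"
      unfolding q_r_def vec_lambda_beta
    proof (rule sum.cong)
      fix k
      have "(D + 1) * (1 / (D + 1) * ((if i = k then 1 else 0) + 1 / D)) - 1 / D = (if i = k then 1 else 0)"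
        using D by simp
      then show "((real d + 1) * (basis_dist d i :: real^'n) $ k - 1 / real d) * r j k = (if i = k then r j k else 0)"
        by (simp add: basis_dist_def D_def)
    qed simp
    also have "\<dots> = (s j)$i" by (simp add: sij)
    finally show ?thesis .
  qed
  have Rs: "R *v s i = basis_dist d i" for i using RA[OF hypQ[OF s(1)]] s(2) by simp
  show ?thesis
    using orth Rc sQ reg Rij Rbd Rs unfolding D_def by blast
qed

end
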